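(* Let $(X,d)$ be a complete b-metric space with coefficient $s \geq 1$, and let $T: X \to X$ be a continuous PA-contraction with contraction constant $\alpha \in (0,1)$ such that $s\alpha < 1$. Then $T$ has a unique fixed point in $X$, and for every $x \in X$ the sequence $\{T^n x\}_{n\ge 0}$ converges to this fixed point.
   Context: A b-metric space with coefficient $s \ge 1$ is a nonempty set $X$ with a function $d: X\times X \to [0,\infty)$ such that: $d(x,y)=0$ iff $x=y$; $d(x,y)=d(y,x)$ for all $x,y$; and $d(x,z) \le s\,(d(x,y)+d(y,z))$ for all $x,y,z \in X$. A sequence $\{x_n\}$ is Cauchy if $\lim_{m,n\to\infty} d(x_n,x_m)=0$, it converges to $x$ if $d(x_n,x)\to 0$, and the space is complete if every Cauchy sequence converges in $X$; continuity of $T$ means $x_n \to x$ implies $Tx_n \to Tx$. A mapping $T: X\to X$ is a PA-contraction (path-averaged contraction) with contraction constant $\alpha$ if $\alpha \in (0,1)$ and there exists $N \in \mathbb{N}$ such that for all $x,y \in X$ and all $n \ge N$, $$\sum_{k=0}^{n-1} d(T^{k+1}x, T^{k+1}y) \le \alpha \sum_{k=0}^{n-1} d(T^k x, T^k y),$$ where $T^0$ is the identity. *)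

theory Defs
  imports Complex_Main
begin

definition b_metric :: "'a set \<Rightarrow> ('a \<Rightarrow> 'a \<Rightarrow> real) \<Rightarrow> real \<Rightarrow> bool" where
  "b_metric X d s \<longleftrightarrow> X \<noteq> {} \<and> s \<ge> 1 \<and>
     (\<forall>x\<in>X. \<forall>y\<in>X. d x y \<ge> 0) \<and>
     (\<forall>x\<in>X. \<forall>y\<in>X. d x y = 0 \<longleftrightarrow> x = y) \<and>
     (\<forall>x\<in>X. \<forall>y\<in>X. d x y = d y x) \<and>
     (\<forall>x\<in>X. \<forall>y\<in>X. \<forall>z\<in>X. d x z \<le> s * (d x y + d y z))"

definition b_converges :: "('a \<Rightarrow> 'a \<Rightarrow> real) \<Rightarrow> (nat \<Rightarrow> 'a) \<Rightarrow> 'a \<Rightarrow> bool" where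
  "b_converges d u x \<longleftrightarrow> (\<lambda>n. d (u n) x) \<longlonglongrightarrow> 0"

definition b_Cauchy :: "('a \<Rightarrow> 'a \<Rightarrow> real) \<Rightarrow> (nat \<Rightarrow> 'a) \<Rightarrow> bool" where
  "b_Cauchy d u \<longleftrightarrow> (\<forall>e>0. \<exists>N. \<forall>m\<ge>N. \<forall>n\<ge>N. d (u n) (u m) < e)"

definition b_complete :: "'a set \<Rightarrow> ('a \<Rightarrow> 'a \<Rightarrow> real) \<Rightarrow> bool" where
  "b_complete X d \<longleftrightarrow> (\<forall>u. (\<forall>n. u n \<in> X) \<and> b_Cauchy d u \<longrightarrow> (\<exists>x\<in>X. b_converges d u x))"

definition b_continuous :: "'a set \<Rightarrow> ('a \<Rightarrow> 'a \<Rightarrow> real) \<Rightarrow> ('a \<Rightarrow> 'a) \<Rightarrow> bool" where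
  "b_continuous X d T \<longleftrightarrow> (\<forall>u x. (\<forall>n. u n \<in> X) \<and> x \<in> X \<and> b_converges d u x
      \<longrightarrow> b_converges d (\<lambda>n. T (u n)) (T x))"

definition PA_contraction :: "'a set \<Rightarrow> ('a \<Rightarrow> 'a \<Rightarrow> real) \<Rightarrow> ('a \<Rightarrow> 'a) \<Rightarrow> real \<Rightarrow> bool" where
  "PA_contraction X d T \<alpha> \<longleftrightarrow> 0 < \<alpha> \<and> \<alpha> < 1 \<and>
     (\<exists>N::nat. \<forall>x\<in>X. \<forall>y\<in>X. \<forall>n\<ge>N.
        (\<Sum>k<n. d ((T ^^ (k+1)) x) ((T ^^ (k+1)) y)) \<le> \<alpha> * (\<Sum>k<n. d ((T ^^ k) x) ((T ^^ k) y)))"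

end

theory Submission imports Defs begin

lemma seqA:
  fixes a :: "nat \<Rightarrow> real"
  assumes nn: "\<And>k. a k \<ge> 0" and al: "0 < \<alpha>" "\<alpha> < 1"
    and H: "\<And>n. n \<ge> N \<Longrightarrow> (\<Sum>k<n. a (k+1)) \<le> \<alpha> * (\<Sum>k<n. a k)"
  shows "summable a \<and> (\<Sum>k. a (Suc k)) \<le> \<alpha> * (\<Sum>k. a k)"
proof -
  have sh: "(\<Sum>k<n. a (k+1)) = (\<Sum>k<Suc n. a k) - a 0" for n
    using sum.lessThan_Suc_shift[of a n] by simp
  have bnd: "(\<Sum>k<n. a k) \<le> a 0 / (1-\<alpha>)" for n
  proof -
    let ?m = "max n N"
    have mono: "(\<Sum>k<n. a k) \<le> (\<Sum>k<Suc ?m. a k)" by (rule sum_mono2) (auto simp: nn)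
    have "(\<Sum>k<Suc ?m. a k) - a 0 \<le> \<alpha> * (\<Sum>k<?m. a k)" using H[of ?m] sh by simp
    also have "\<dots> \<le> \<alpha> * (\<Sum>k<Suc ?m. a k)" using nn al by (intro mult_left_mono) auto
    finally have "(1-\<alpha>) * (\<Sum>k<Suc ?m. a k) \<le> a 0" by (simp add: algebra_simps)
    then have "(\<Sum>k<Suc ?m. a k) \<le> a 0 / (1-\<alpha>)" using al by (simp add: field_simps)
    then show ?thesis using mono by linarith
  qed
  have sa: "summable a" by (rule summableI_nonneg_bounded[OF nn bnd])
  have sa1: "summable (\<lambda>k. a (Suc k))" using summable_ignore_initial_segment[OF sa, of 1] by simp
  have "(\<Sum>k. a (Suc k)) \<le> \<alpha> * (\<Sum>k. a k)"
  proof (rule LIMSEQ_le)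
    show "(\<lambda>n. \<Sum>k<n. a (Suc k)) \<longlonglongrightarrow> (\<Sum>k. a (Suc k))" by (rule summable_LIMSEQ[OF sa1])
    show "(\<lambda>n. \<alpha> * (\<Sum>k<n. a k)) \<longlonglongrightarrow> \<alpha> * (\<Sum>k. a k)" by (intro tendsto_mult_left summable_LIMSEQ[OF sa])
    show "\<exists>N. \<forall>n\<ge>N. (\<Sum>k<n. a (Suc k)) \<le> \<alpha> * (\<Sum>k<n. a k)" using H by auto
  qed
  with sa show ?thesis by simp
qed

lemma seqB:
  fixes a :: "nat \<Rightarrow> real"
  assumes nn: "\<And>k. a k \<ge> 0" and al: "0 < \<alpha>" "\<alpha> < 1"
    and H: "\<And>j n. n \<ge> N \<Longrightarrow> (\<Sum>k<n. a (k+j+1)) \<le> \<alpha> * (\<Sum>k<n. a (k+j))"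
  shows "a j \<le> \<alpha> ^ j * (a 0 / (1-\<alpha>))"
proof -
  define R where "R j = (\<Sum>k. a (k+j))" for j
  have S: "summable (\<lambda>k. a (k+j)) \<and> (\<Sum>k. a (Suc k + j)) \<le> \<alpha> * (\<Sum>k. a (k+j))" for j
    using seqA[of "\<lambda>k. a (k+j)" \<alpha> N] nn al H[of _ j] by (simp add: add.commute add.left_commute)
  have R1: "R (Suc j) \<le> \<alpha> * R j" for j using S[of j] unfolding R_def by simp
  have Rg: "R j \<le> \<alpha> ^ j * R 0" for j
  proof (induction j)
    case 0 then show ?case by simp
  next
    case (Suc j)
    have "R (Suc j) \<le> \<alpha> * R j" by (rule R1)
    also have "\<dots> \<le> \<alpha> * (\<alpha> ^ j * R 0)" using Suc al by (intro mult_left_mono) auto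
    finally show ?case by simp
  qed
  have aR: "a j \<le> R j" for j
    using sum_le_suminf[of "\<lambda>k. a (k+j)" "{0}"] S[of j] nn unfolding R_def by simp
  have sa: "summable a" using S[of 0] by simp
  have "(\<Sum>k. a (Suc k)) = R 0 - a 0" using suminf_split_head[OF sa] unfolding R_def by simp
  moreover have "(\<Sum>k. a (Suc k)) \<le> \<alpha> * R 0" using S[of 0] unfolding R_def by simp
  ultimately have "(1-\<alpha>) * R 0 \<le> a 0" by (simp add: algebra_simps)
  then have R0: "R 0 \<le> a 0 / (1-\<alpha>)" using al by (simp add: field_simps)
  have "a j \<le> \<alpha> ^ j * R 0" using aR Rg order_trans by blast
  also have "\<dots> \<le> \<alpha> ^ j * (a 0 / (1-\<alpha>))" using R0 al by (intro mult_left_mono) auto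
  finally show ?thesis .
qed

lemma chain:
  assumes bm: "b_metric X d s" and u: "\<And>n. u n \<in> X"
  shows "d (u n) (u (n+p)) \<le> (\<Sum>i<p. s^(i+1) * d (u (n+i)) (u (n+i+1)))"
proof (induction p arbitrary: n)
  case 0
  have "u n \<in> X" by (rule u)
  moreover have "\<forall>x\<in>X. \<forall>y\<in>X. d x y = 0 \<longleftrightarrow> x = y" using bm unfolding b_metric_def by blast
  ultimately have "d (u n) (u n) = 0" by blast
  then show ?case by simp
next
  case (Suc p)
  have tri: "d (u n) (u (n + Suc p)) \<le> s * (d (u n) (u (n+1)) + d (u (n+1)) (u (n+1+p)))"
    using bm u unfolding b_metric_def by (simp add: add.commute add.left_commute)
  have s0: "s \<ge> 0" using bm unfolding b_metric_def by simp
  have "s * (d (u n) (u (n+1)) + d (u (n+1)) (u (n+1+p)))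
      \<le> s * (d (u n) (u (n+1)) + (\<Sum>i<p. s^(i+1) * d (u (n+1+i)) (u (n+1+i+1))))"
    using Suc.IH[of "n+1"] s0 by (intro mult_left_mono) auto
  also have "\<dots> = (\<Sum>i<Suc p. s^(i+1) * d (u (n+i)) (u (n+i+1)))"
    by (simp only: sum.lessThan_Suc_shift) (simp add: sum_distrib_left algebra_simps)
  finally show ?case using tri by linarith
qed

lemma funpow_comb: "(T ^^ m) ((T ^^ j) z) = (T ^^ (m+j)) z"
  by (simp add: funpow_add)

lemma iter_in: "\<forall>x\<in>X. T x \<in> X \<Longrightarrow> x \<in> X \<Longrightarrow> (T ^^ n) x \<in> X"
  by (induction n) auto

lemma conv:
  fixes X :: "'a set" and d :: "'a \<Rightarrow> 'a \<Rightarrow> real" and s \<alpha> :: real and T :: "'a \<Rightarrow> 'a"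
  assumes bm: "b_metric X d s"
    and cp: "b_complete X d"
    and TX: "\<forall>x\<in>X. T x \<in> X"
    and ct: "b_continuous X d T"
    and pa: "PA_contraction X d T \<alpha>"
    and sa: "s * \<alpha> < 1"
    and x: "x \<in> X"
  shows "\<exists>p\<in>X. T p = p \<and> b_converges d (\<lambda>n. (T ^^ n) x) p"
proof -
  have al: "0 < \<alpha>" "\<alpha> < 1" using pa unfolding PA_contraction_def by auto
  obtain N where HN: "\<And>x y n. x \<in> X \<Longrightarrow> y \<in> X \<Longrightarrow> n \<ge> N \<Longrightarrow>
     (\<Sum>k<n. d ((T ^^ (k+1)) x) ((T ^^ (k+1)) y)) \<le> \<alpha> * (\<Sum>k<n. d ((T ^^ k) x) ((T ^^ k) y))"
    using pa unfolding PA_contraction_def by blast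
  have s1: "s \<ge> 1" using bm unfolding b_metric_def by simp
  have dnn: "\<And>a b. a \<in> X \<Longrightarrow> b \<in> X \<Longrightarrow> d a b \<ge> 0" using bm unfolding b_metric_def by simp
  have dsym: "\<And>a b. a \<in> X \<Longrightarrow> b \<in> X \<Longrightarrow> d a b = d b a" using bm unfolding b_metric_def by simp
  have d0: "\<And>a b. a \<in> X \<Longrightarrow> b \<in> X \<Longrightarrow> d a b = 0 \<longleftrightarrow> a = b" using bm unfolding b_metric_def by simp
  have dtri: "\<And>a b c. a \<in> X \<Longrightarrow> b \<in> X \<Longrightarrow> c \<in> X \<Longrightarrow> d a c \<le> s * (d a b + d b c)"
    using bm unfolding b_metric_def by simp
  define u where "u n = (T ^^ n) x" for n
  have uX: "u n \<in> X" for n unfolding u_def using iter_in[OF TX x] .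
  have TxX: "T x \<in> X" using TX x by simp
  define a where "a n = d (u n) (u (n+1))" for n
  have a_alt: "a n = d ((T ^^ n) x) ((T ^^ n) (T x))" for n
    unfolding a_def u_def by (simp add: funpow_swap1[symmetric])
  have ann: "a n \<ge> 0" for n unfolding a_def using dnn uX by simp
  have H: "(\<Sum>k<n. a (k+j+1)) \<le> \<alpha> * (\<Sum>k<n. a (k+j))" if "n \<ge> N" for j n
  proof -
    have "(\<Sum>k<n. d ((T ^^ (k+1)) ((T^^j) x)) ((T ^^ (k+1)) ((T^^j) (T x))))
      \<le> \<alpha> * (\<Sum>k<n. d ((T ^^ k) ((T^^j) x)) ((T ^^ k) ((T^^j) (T x))))"
      using HN[OF iter_in[OF TX x] iter_in[OF TX TxX] that] .
    then show ?thesis unfolding a_alt funpow_comb by (simp add: add.commute add.left_commute)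
  qed
  define C where "C = a 0 / (1-\<alpha>)"
  have C0: "C \<ge> 0" unfolding C_def using ann[of 0] al by simp
  have ag: "a k \<le> \<alpha>^k * C" for k unfolding C_def by (rule seqB[OF ann al H])
  define q where "q = s * \<alpha>"
  have q0: "0 \<le> q" "q < 1" using s1 al sa unfolding q_def by auto
  define K where "K = s * C / (1 - q)"
  have K0: "K \<ge> 0" unfolding K_def using q0 s1 C0 by simp
  have bnd1: "d (u n) (u (n+p)) \<le> K * \<alpha>^n" for n p
  proof -
    have "d (u n) (u (n+p)) \<le> (\<Sum>i<p. s^(i+1) * a (n+i))"
      using chain[where u=u and n=n and p=p, OF bm uX] unfolding a_def by simp
    also have "\<dots> \<le> (\<Sum>i<p. s^(i+1) * (\<alpha>^(n+i) * C))"
      using ag s1 by (intro sum_mono mult_left_mono) auto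
    also have "\<dots> = s * \<alpha>^n * C * (\<Sum>i<p. q^i)"
      unfolding q_def by (simp add: sum_distrib_left power_add power_mult_distrib algebra_simps)
    also have "(\<Sum>i<p. q^i) \<le> 1 / (1-q)"
    proof -
      have "(\<Sum>i<p. q^i) = (1 - q^p) / (1-q)" using sum_gp_strict[of q p] q0 by simp
      also have "\<dots> \<le> 1 / (1-q)" using q0 by (intro divide_right_mono) auto
      finally show ?thesis .
    qed
    then have "s * \<alpha>^n * C * (\<Sum>i<p. q^i) \<le> s * \<alpha>^n * C * (1 / (1-q))"
      using s1 al C0 by (intro mult_left_mono) auto
    also have "\<dots> = K * \<alpha>^n" unfolding K_def by simp
    finally show ?thesis by simp
  qed
  have bnd: "d (u n) (u m) \<le> K * \<alpha>^M" if "n \<ge> M" "m \<ge> M" for n m M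
  proof -
    have "d (u n) (u m) \<le> K * \<alpha>^(min n m)"
    proof (cases "n \<le> m")
      case True
      then show ?thesis using bnd1[of n "m-n"] by simp
    next
      case False
      then show ?thesis using bnd1[of m "n-m"] dsym[OF uX[of n] uX[of m]] by simp
    qed
    also have "\<dots> \<le> K * \<alpha>^M" using that al K0
      by (intro mult_left_mono power_decreasing) auto
    finally show ?thesis .
  qed
  have lim0: "(\<lambda>M. K * \<alpha>^M) \<longlonglongrightarrow> 0"
    using al by (intro tendsto_mult_right_zero LIMSEQ_power_zero) simp
  have cau: "b_Cauchy d u" unfolding b_Cauchy_def
  proof (intro allI impI)
    fix e :: real assume "e > 0"
    then have "eventually (\<lambda>M. K * \<alpha>^M < e) sequentially" using order_tendstoD(2)[OF lim0] by simp
    then obtain M where "K * \<alpha>^M < e" unfolding eventually_sequentially by auto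
    then show "\<exists>N. \<forall>m\<ge>N. \<forall>n\<ge>N. d (u n) (u m) < e" using bnd by (meson le_less_trans)
  qed
  obtain p where pX: "p \<in> X" and up: "b_converges d u p" using cp cau uX unfolding b_complete_def by blast
  have Tu: "b_converges d (\<lambda>n. T (u n)) (T p)" using ct uX pX up unfolding b_continuous_def by blast
  have TpX: "T p \<in> X" using TX pX by simp
  have l1: "(\<lambda>n. d (u (Suc n)) p) \<longlonglongrightarrow> 0" using up unfolding b_converges_def by (rule LIMSEQ_Suc)
  have l2: "(\<lambda>n. d (u (Suc n)) (T p)) \<longlonglongrightarrow> 0" using Tu unfolding b_converges_def u_def by simp
  have l3: "(\<lambda>n. s * (d (u (Suc n)) p + d (u (Suc n)) (T p))) \<longlonglongrightarrow> 0"
    using tendsto_mult_right_zero[OF tendsto_add_zero[OF l1 l2]] by simp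
  have "d p (T p) \<le> 0"
  proof (rule LIMSEQ_le_const[OF l3])
    show "\<exists>N. \<forall>n\<ge>N. d p (T p) \<le> s * (d (u (Suc n)) p + d (u (Suc n)) (T p))"
      using dtri[OF pX uX TpX] dsym[OF pX uX] by auto
  qed
  then have "d p (T p) = 0" using dnn[OF pX TpX] by simp
  then have "T p = p" using d0[OF pX TpX] by simp
  then show ?thesis using pX up unfolding u_def by blast
qed

lemma uniq:
  fixes X :: "'a set" and d :: "'a \<Rightarrow> 'a \<Rightarrow> real" and s \<alpha> :: real and T :: "'a \<Rightarrow> 'a"
  assumes bm: "b_metric X d s"
    and pa: "PA_contraction X d T \<alpha>"
    and p: "p \<in> X" "T p = p" and q: "q \<in> X" "T q = q"
  shows "p = q"
proof -
  have al: "0 < \<alpha>" "\<alpha> < 1" using pa unfolding PA_contraction_def by auto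
  obtain N where HN: "\<And>x y n. x \<in> X \<Longrightarrow> y \<in> X \<Longrightarrow> n \<ge> N \<Longrightarrow>
     (\<Sum>k<n. d ((T ^^ (k+1)) x) ((T ^^ (k+1)) y)) \<le> \<alpha> * (\<Sum>k<n. d ((T ^^ k) x) ((T ^^ k) y))"
    using pa unfolding PA_contraction_def by blast
  have fp: "(T ^^ k) p = p" "(T ^^ k) q = q" for k using p q by (induction k) auto
  have "real (Suc N) * d p q \<le> \<alpha> * (real (Suc N) * d p q)"
    using HN[OF p(1) q(1), of "Suc N"] fp p(2) q(2) by simp
  then have "(1 - \<alpha>) * (real (Suc N) * d p q) \<le> 0" by (simp add: algebra_simps)
  moreover have "d p q \<ge> 0" using bm p q unfolding b_metric_def by simp
  ultimately have "d p q = 0" using al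
    by (smt (verit, ccfv_SIG) mult_pos_pos of_nat_0_less_iff zero_less_Suc)
  then show ?thesis using bm p q unfolding b_metric_def by simp
qed

theorem theorem1:
  fixes X :: "'a set" and d :: "'a \<Rightarrow> 'a \<Rightarrow> real" and s \<alpha> :: real and T :: "'a \<Rightarrow> 'a"
  assumes "b_metric X d s"
    and "b_complete X d"
    and "\<forall>x\<in>X. T x \<in> X"
    and "b_continuous X d T"
    and "PA_contraction X d T \<alpha>"
    and "s * \<alpha> < 1"
  shows "(\<exists>!p. p \<in> X \<and> T p = p) \<and>
         (\<forall>p\<in>X. T p = p \<longrightarrow> (\<forall>x\<in>X. b_converges d (\<lambda>n. (T ^^ n) x) p))"
proof
  obtain x0 where "x0 \<in> X" using assms(1) unfolding b_metric_def by blast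
  then obtain p where "p \<in> X" "T p = p" using conv[OF assms] by blast
  then show "\<exists>!p. p \<in> X \<and> T p = p" using uniq[OF assms(1) assms(5)] by blast
next
  show "\<forall>p\<in>X. T p = p \<longrightarrow> (\<forall>x\<in>X. b_converges d (\<lambda>n. (T ^^ n) x) p)"
  proof (intro ballI impI)
    fix p x assume "p \<in> X" "T p = p" "x \<in> X"
    then obtain q where "q \<in> X" "T q = q" "b_converges d (\<lambda>n. (T ^^ n) x) q" using conv[OF assms] by blast
    moreover have "q = p" using uniq[OF assms(1) assms(5)] \<open>q \<in> X\<close> \<open>T q = q\<close> \<open>p \<in> X\<close> \<open>T p = p\<close> by blast
    ultimately show "b_converges d (\<lambda>n. (T ^^ n) x) p" by simp
  qed
qed

end
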